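(* Let $q=2^h$ and let $$U=\left\{\left(x,\,y,\,x^q+y^{q^2},\,x^{q^2}+y^q+y^{q^2}\right): x,y\in\mathbb F_{q^4}\right\}\subseteq\mathbb F_{q^4}^4.$$ Then $U$ is maximum scattered if and only if $h\not\equiv 2\pmod 4$.
   Context: $U$ is an $\mathbb F_q$-subspace of $\mathbb F_{q^4}^4$. An $\mathbb F_q$-subspace $U$ of $\mathbb F_{q^m}^k$ is scattered if $\dim_{\mathbb F_q}(U\cap\langle w\rangle_{\mathbb F_{q^m}})\le 1$ for every nonzero $w\in\mathbb F_{q^m}^k$; a scattered subspace has $\mathbb F_q$-dimension at most $km/2$, and it is called maximum scattered if its $\mathbb F_q$-dimension equals $km/2$ (here $km/2=8$). *)

theory Defs
  imports "HOL-Analysis.Analysis"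
begin

text \<open>Vectors of F^n are elements of type 'a^'n.  F is a finite field of order q^m;
  its subfield F_q is the set of fixed points of the Frobenius x \<mapsto> x^q.\<close>

definition Fq :: "nat \<Rightarrow> ('a::field) set" where
  "Fq q = {a. a ^ q = a}"

definition smultv :: "'a::field \<Rightarrow> 'a ^ 'n \<Rightarrow> 'a ^ 'n" where
  "smultv c v = (\<chi> i. c * v $ i)"

definition Fq_subspace :: "nat \<Rightarrow> ('a::field ^ 'n) set \<Rightarrow> bool" where
  "Fq_subspace q U \<longleftrightarrow> 0 \<in> U \<and> (\<forall>u\<in>U. \<forall>v\<in>U. u + v \<in> U)
     \<and> (\<forall>c\<in>Fq q. \<forall>u\<in>U. smultv c u \<in> U)"

definition Fq_indep :: "nat \<Rightarrow> ('a::field ^ 'n) set \<Rightarrow> bool" where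
  "Fq_indep q S \<longleftrightarrow> finite S \<and>
     (\<forall>c. (\<forall>s\<in>S. c s \<in> Fq q) \<longrightarrow> (\<Sum>s\<in>S. smultv (c s) s) = 0 \<longrightarrow> (\<forall>s\<in>S. c s = 0))"

definition Fq_dim :: "nat \<Rightarrow> ('a::{field,finite} ^ 'n) set \<Rightarrow> nat" where
  "Fq_dim q W = Max (card ` {S. S \<subseteq> W \<and> Fq_indep q S})"

definition Fspan1 :: "'a::field ^ 'n \<Rightarrow> ('a ^ 'n) set" where
  "Fspan1 w = {smultv c w | c. True}"

definition scattered :: "nat \<Rightarrow> ('a::{field,finite} ^ 'n) set \<Rightarrow> bool" where
  "scattered q U \<longleftrightarrow> Fq_subspace q U \<and>
     (\<forall>w. w \<noteq> 0 \<longrightarrow> Fq_dim q (U \<inter> Fspan1 w) \<le> 1)"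

definition maximum_scattered :: "nat \<Rightarrow> nat \<Rightarrow> ('a::{field,finite} ^ 'n) set \<Rightarrow> bool" where
  "maximum_scattered q m U \<longleftrightarrow> scattered q U \<and> 2 * Fq_dim q U = CARD('n) * m"

end

theory Submission
  imports Defs "HOL-Computational_Algebra.Polynomial"
begin

lemma card_char_zero:
  fixes x :: "'a::{field,finite}"
  shows "of_nat CARD('a) = (0::'a)"
proof -
  have b: "bij_betw (\<lambda>y. y + (1::'a)) UNIV UNIV"
    by (rule bij_betwI[where g="\<lambda>y. y - 1"]) auto
  have "(\<Sum>y\<in>UNIV. y) = (\<Sum>y\<in>UNIV. y + (1::'a))"
    using sum.reindex_bij_betw[OF b, of "\<lambda>y. y"] by simp
  also have "\<dots> = (\<Sum>y\<in>UNIV. y) + of_nat CARD('a)"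
    by (simp add: sum.distrib)
  finally show ?thesis by simp
qed

lemma char2_of_card:
  assumes "CARD('a::{field,finite}) = 2 ^ n"
  shows "(2::'a) = 0"
proof -
  have "(of_nat (2^n) :: 'a) = 0" using card_char_zero[where 'a='a] assms by simp
  hence "(2::'a)^n = 0" by simp
  thus ?thesis by simp
qed

lemma frob_card:
  fixes x :: "'a::{field,finite}"
  shows "x ^ CARD('a) = x"
proof (cases "x = 0")
  case True
  have "CARD('a) > 0" by simp
  then show ?thesis using True by (simp add: zero_power)
next
  case False
  let ?A = "UNIV - {0::'a}"
  have b: "bij_betw (\<lambda>y. x * y) ?A ?A"
    by (rule bij_betwI[where g="\<lambda>y. y / x"]) (use False in auto)
  have "(\<Prod>y\<in>?A. y) = (\<Prod>y\<in>?A. x * y)"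
    using prod.reindex_bij_betw[OF b, of "\<lambda>y. y"] by simp
  also have "\<dots> = x ^ card ?A * (\<Prod>y\<in>?A. y)"
    by (simp add: prod.distrib)
  finally have "x ^ card ?A = 1"
    by (simp add: prod_zero_iff)
  moreover have "card ?A = CARD('a) - 1" by (simp add: card_Diff_subset)
  moreover have "CARD('a) = Suc (CARD('a) - 1)" by simp
  ultimately have "x ^ CARD('a) = x * x ^ (CARD('a) - 1)" by (metis power_Suc)
  then show ?thesis using \<open>x ^ card ?A = 1\<close> \<open>card ?A = CARD('a) - 1\<close> by simp
qed

lemma char2_plus_self:
  assumes "(2::'a::field) = 0" shows "(a::'a) + a = 0"
  by (metis assms mult_2 mult_zero_left)

lemma char2_minus:
  assumes "(2::'a::field) = 0" shows "- (a::'a) = a"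
  by (metis add_eq_0_iff2 assms char2_plus_self)

lemma char2_diff:
  assumes "(2::'a::field) = 0" shows "(a::'a) - b = a + b"
  by (simp add: assms char2_minus)

lemma char2_pow2_add:
  assumes "(2::'a::field) = 0"
  shows "((a::'a) + b) ^ (2^k) = a ^ (2^k) + b ^ (2^k)"
proof (induction k)
  case 0 then show ?case by simp
next
  case (Suc k)
  have sq: "(u + v)^2 = u^2 + v^2" for u v :: 'a
    by (simp add: power2_sum assms)
  have "(a + b) ^ (2 ^ Suc k) = ((a+b)^(2^k))^2" by (simp add: power_mult[symmetric] mult.commute)
  also have "\<dots> = (a^(2^k))^2 + (b^(2^k))^2" using Suc sq by simp
  also have "\<dots> = a ^ (2 ^ Suc k) + b ^ (2 ^ Suc k)" by (simp add: power_mult[symmetric] mult.commute)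
  finally show ?case .
qed

lemma root_bound:
  fixes c :: "nat \<Rightarrow> 'a::field" and e :: "nat \<Rightarrow> nat"
  assumes "finite I" "j \<in> I" "c j \<noteq> 0" "\<forall>i\<in>I. i \<noteq> j \<longrightarrow> e i \<noteq> e j" "\<forall>i\<in>I. e i \<le> D"
  shows "card {x. (\<Sum>i\<in>I. c i * x ^ e i) = 0} \<le> D"
proof -
  define p where "p = (\<Sum>i\<in>I. monom (c i) (e i))"
  have pe: "poly p x = (\<Sum>i\<in>I. c i * x ^ e i)" for x
    unfolding p_def poly_sum by (simp add: poly_monom)
  have cj: "coeff p (e j) = c j"
  proof -
    have "coeff p (e j) = (\<Sum>i\<in>I. if e i = e j then c i else 0)"
      unfolding p_def coeff_sum by simp
    also have "\<dots> = (\<Sum>i\<in>{j}. if e i = e j then c i else 0)"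
      using assms by (intro sum.mono_neutral_right) auto
    finally show ?thesis by simp
  qed
  hence "p \<noteq> 0" using assms(3) by auto
  moreover have "degree p \<le> D"
  proof (rule degree_le, intro allI impI)
    fix n assume "D < n"
    have "coeff p n = (\<Sum>i\<in>I. if e i = n then c i else 0)"
      unfolding p_def coeff_sum by simp
    also have "\<dots> = 0" using assms(5) \<open>D < n\<close> by (intro sum.neutral) fastforce
    finally show "coeff p n = 0" .
  qed
  ultimately have "card {x. poly p x = 0} \<le> D"
    using card_poly_roots_bound[of p] by linarith
  thus ?thesis unfolding pe .
qed

lemma ker_image_count:
  fixes f :: "'a::{ab_group_add,finite} \<Rightarrow> 'b::ab_group_add"
  assumes add: "\<And>x y. f (x + y) = f x + f y"
  shows "CARD('a) = card {x. f x = 0} * card (range f)"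
proof -
  have f0: "f 0 = 0" using add[of 0 0] by simp
  have fminus: "f (x - y) = f x - f y" for x y
    using add[of y "x - y"] by (simp add: algebra_simps)
  have fib: "card (f -` {y}) = card {x. f x = 0}" if "y \<in> range f" for y
  proof -
    obtain x0 where y: "y = f x0" using \<open>y \<in> range f\<close> by auto
    have "f -` {y} = (\<lambda>k. x0 + k) ` {x. f x = 0}"
    proof
      show "f -` {y} \<subseteq> (\<lambda>k. x0 + k) ` {x. f x = 0}"
      proof
        fix x assume "x \<in> f -` {y}"
        hence "f (x - x0) = 0" using y fminus by simp
        moreover have "x = x0 + (x - x0)" by simp
        ultimately show "x \<in> (\<lambda>k. x0 + k) ` {x. f x = 0}" by blast
      qed
      show "(\<lambda>k. x0 + k) ` {x. f x = 0} \<subseteq> f -` {y}"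
        using y add by auto
    qed
    moreover have "inj (\<lambda>k. x0 + k)" by (auto intro: injI)
    ultimately show ?thesis by (simp add: card_image inj_on_subset)
  qed
  have "(UNIV::'a set) = (\<Union>y\<in>range f. f -` {y})" by auto
  hence "CARD('a) = card (\<Union>y\<in>range f. f -` {y})" by simp
  also have "\<dots> = (\<Sum>y\<in>range f. card (f -` {y}))"
    by (rule card_UN_disjoint) auto
  also have "\<dots> = (\<Sum>y\<in>range f. card {x. f x = 0})"
    using fib by (intro sum.cong) auto
  also have "\<dots> = card {x. f x = 0} * card (range f)" by simp
  finally show ?thesis .
qed

lemma char2_add_eq0: assumes "(2::'a::field) = 0" shows "((a::'a) + b = 0) = (a = b)"
  by (metis add_eq_0_iff2 assms char2_minus)

lemma artin_schreier:
  fixes p e n :: nat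
  assumes card: "CARD('a::{field,finite}) = p ^ n" and pe: "p = 2 ^ e" and e1: "e \<ge> 1" and n1: "n \<ge> 1"
  shows "card {x::'a. x ^ p = x} = p \<and> range (\<lambda>x::'a. x ^ p + x) = {y. (\<Sum>i<n. y ^ (p^i)) = 0}"
proof -
  have c2: "(2::'a) = 0" using card pe char2_of_card[of "e*n"] by (simp add: power_mult)
  have p2: "p \<ge> 2" using pe e1 by (metis one_le_numeral power_increasing power_one_right)
  have addp: "(a + b) ^ (p^i) = a ^ (p^i) + b ^ (p^i)" for a b :: 'a and i
    using char2_pow2_add[OF c2, of a b "e*i"] pe by (simp add: power_mult)
  have addp1: "(a + b) ^ p = a ^ p + b ^ p" for a b :: 'a
    using addp[of a b 1] by simp
  define L where "L = (\<lambda>x::'a. x ^ p + x)"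
  define T where "T = (\<lambda>y::'a. (\<Sum>i<n. y ^ (p^i)))"
  have Ladd: "L (x + y) = L x + L y" for x y
    unfolding L_def addp1 by (simp add: algebra_simps)
  have TL: "T (L x) = 0" for x
  proof -
    have "T (L x) = (\<Sum>i<n. x ^ (p ^ Suc i) + x ^ (p ^ i))"
      unfolding T_def L_def addp by (simp add: power_mult[symmetric] mult.commute)
    also have "\<dots> = (\<Sum>i<n. x ^ (p ^ Suc i) - x ^ (p ^ i))"
      by (simp add: char2_diff[OF c2])
    also have "\<dots> = x ^ (p ^ n) - x ^ (p ^ 0)" by (rule sum_lessThan_telescope)
    also have "\<dots> = 0" using frob_card[of x] card by simp
    finally show ?thesis .
  qed
  have kerL: "{x. L x = 0} = {x. x ^ p = x}"
    unfolding L_def using char2_add_eq0[OF c2] by auto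
  have cardkerL: "card {x. L x = 0} \<le> p"
  proof -
    have "card {x::'a. (\<Sum>i\<in>{0::nat,1}. 1 * x ^ (if i = 0 then p else 1)) = 0} \<le> p"
      by (rule root_bound[where j=0]) (use p2 in auto)
    moreover have "{x::'a. (\<Sum>i\<in>{0::nat,1}. 1 * x ^ (if i = 0 then p else 1)) = 0} = {x. L x = 0}"
      unfolding L_def by auto
    ultimately show ?thesis by simp
  qed
  have cardkerT: "card {y. T y = 0} \<le> p ^ (n - 1)"
  proof -
    have "card {y::'a. (\<Sum>i\<in>{..<n}. 1 * y ^ (p ^ i)) = 0} \<le> p ^ (n - 1)"
    proof (rule root_bound[where j="n-1"])
      show "\<forall>i\<in>{..<n}. i \<noteq> n - 1 \<longrightarrow> p ^ i \<noteq> p ^ (n - 1)"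
        using p2 by (simp add: power_inject_exp)
      show "\<forall>i\<in>{..<n}. p ^ i \<le> p ^ (n - 1)"
        using p2 by (auto intro: power_increasing)
    qed (use n1 in auto)
    thus ?thesis unfolding T_def by simp
  qed
  have count: "p ^ n = card {x. L x = 0} * card (range L)"
    using ker_image_count[of L] Ladd card by simp
  have sub: "range L \<subseteq> {y. T y = 0}" using TL by auto
  have pn: "p ^ n = p * p ^ (n - 1)" using n1 by (metis Suc_diff_1 le_less_trans less_one linorder_not_le power_Suc)
  have "p * p ^ (n - 1) \<le> p * card (range L)"
    using count cardkerL pn by (metis mult_le_mono1)
  hence r1: "p ^ (n - 1) \<le> card (range L)" using p2 by simp
  have eq: "range L = {y. T y = 0}"
    by (rule card_seteq) (use sub r1 cardkerT in auto)
  have "card (range L) \<le> p ^ (n-1)" using eq cardkerT by simp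
  hence "p * p ^ (n - 1) \<le> card {x. L x = 0} * p ^ (n-1)"
    using count pn by (metis mult_le_mono2)
  hence "p \<le> card {x. L x = 0}" using p2 by simp
  with cardkerL have "card {x. L x = 0} = p" by simp
  with kerL eq show ?thesis unfolding L_def T_def by simp
qed

lemma field_aux1: "(a::'a::field) \<noteq> 0 \<Longrightarrow> z \<noteq> 0 \<Longrightarrow> Z \<noteq> 0 \<Longrightarrow>
  (b * (T * G) + a * z + b * Z) / (a * z) = ((b/a) * Z / z) * (T * G / Z) + (b/a) * Z / z + 1"
  by (simp add: field_simps)

locale frob4 =
  fixes F :: "'a::field \<Rightarrow> 'a"
  assumes Fadd: "F (a + b) = F a + F b"
    and Fmul: "F (a * b) = F a * F b"
    and F1: "F 1 = 1"
    and F4: "F (F (F (F x))) = x"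
    and c2: "(2::'a) = 0"
begin


lemma pp: "(a::'a) + a = 0" by (rule char2_plus_self[OF c2])
lemma F0: "F 0 = 0" using Fadd[of 0 0] pp[of "F 0"] by simp
lemma Finj: "F a = F b \<Longrightarrow> a = b" using F4 by metis

lemma Fz: "F a = 0 \<longleftrightarrow> a = 0" using Finj F0 by metis

lemma Fdiv: "F (a / b) = F a / F b"
proof (cases "b = 0")
  case True then show ?thesis by (simp add: F0)
next
  case False
  have "F a = F (a / b * b)" using False by simp
  also have "\<dots> = F (a/b) * F b" by (rule Fmul)
  finally show ?thesis using False Fz by (simp add: field_simps)
qed

lemma mm: "- (a::'a) = a" by (rule char2_minus[OF c2])
lemma dd: "(a::'a) - b = a + b" by (rule char2_diff[OF c2])
lemma ae: "((a::'a) + b = 0) = (a = b)" by (rule char2_add_eq0[OF c2])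

lemma key:
  assumes E1: "F (l*x) + F (F (l*y)) = l * (F x + F (F y))"
    and E2: "F (F (l*x)) + F (l*y) + F (F (l*y)) = l * (F (F x) + F y + F (F y))"
    and nz: "x \<noteq> 0 \<or> y \<noteq> 0"
    and Fl: "F l \<noteq> l"
  shows "\<exists>w c. w*w + w + 1 = 0 \<and> F w = w \<and> c*c + c = w*w \<and> F c = c + 1"
proof -
  define a where "a = F l + l"
  define b where "b = F (F l) + l"
  have a0: "a \<noteq> 0" using Fl ae unfolding a_def by simp
  have Fa: "F a = b + a" unfolding a_def b_def Fadd by (simp add: algebra_simps c2)
  have E1': "a * F x = b * F (F y)"
  proof -
    have "F l * F x + F (F l) * F (F y) = l * F x + l * F (F y)"
      using E1 by (simp add: Fmul algebra_simps)
    hence "(F l * F x + l * F x) + (F (F l) * F (F y) + l * F (F y)) = 0"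
      by (metis (no_types, lifting) ae add.assoc add.commute)
    hence "a * F x + b * F (F y) = 0" unfolding a_def b_def by (simp add: algebra_simps)
    thus ?thesis using ae by simp
  qed
  have E2': "b * F (F x) + a * F y + b * F (F y) = 0"
  proof -
    have "F (F l) * F (F x) + F l * F y + F (F l) * F (F y) = l * F (F x) + l * F y + l * F (F y)"
      using E2 by (simp add: Fmul algebra_simps c2)
    hence "(F (F l) * F (F x) + F l * F y + F (F l) * F (F y)) + (l * F (F x) + l * F y + l * F (F y)) = 0"
      by (simp only: pp)
    thus ?thesis unfolding a_def b_def by (simp add: algebra_simps)
  qed
  have b0: "b \<noteq> 0"
  proof
    assume "b = 0"
    hence "F x = 0" using E1' a0 by simp
    hence "x = 0" using Fz by simp
    moreover have "y = 0" using E2' \<open>b = 0\<close> a0 Fz by simp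
    ultimately show False using nz by simp
  qed
  have y0: "y \<noteq> 0"
  proof
    assume "y = 0"
    hence "F x = 0" using E1' a0 F0 by simp
    thus False using Fz nz \<open>y = 0\<close> by simp
  qed
  define z where "z = F y"
  have z0: "z \<noteq> 0" using y0 Fz z_def by simp
  have Fz0: "F z \<noteq> 0" using z0 Fz by simp
  have FFz0: "F (F z) \<noteq> 0" using Fz0 Fz by simp
  define t where "t = b / a"
  have hx: "F x = t * F z" using E1' a0 unfolding t_def z_def by (simp add: field_simps)
  have hx2: "F (F x) = F t * F (F z)" using hx Fmul by simp
  have E2'': "b * (F t * F (F z)) + a * z + b * F z = 0"
    using E2' hx2 unfolding z_def by simp
  define w where "w = t * F z / z"
  have Fw: "F w = F t * F (F z) / F z" unfolding w_def Fdiv Fmul ..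
  have hw: "w * F w + w + 1 = 0"
  proof -
    have "(b * (F t * F (F z)) + a * z + b * F z) / (a * z) = 0" using E2'' by simp
    moreover have "(b * (F t * F (F z)) + a * z + b * F z) / (a * z) = (t * F z / z) * (F t * F (F z) / F z) + t * F z / z + 1"
      unfolding t_def by (rule field_aux1[OF a0 z0 Fz0])
    moreover have "w * F w + w + 1 = (t * F z / z) * (F t * F (F z) / F z) + t * F z / z + 1"
      unfolding Fw by (simp add: w_def)
    ultimately show ?thesis by simp
  qed
  have w0: "w \<noteq> 0"
  proof
    assume "w = 0" with hw show False by (simp add: F0)
  qed
  have hw': "w * F w = w + 1"
  proof -
    have "w * F w = (w * F w + w + 1) + (w + 1)" by (simp add: algebra_simps c2)
    thus ?thesis using hw by simp
  qed
  have w10: "w + 1 \<noteq> 0"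
  proof
    assume "w + 1 = 0"
    hence "F w = 0" using hw' w0 by simp
    thus False using w0 Fz by simp
  qed
  have Fw': "F w = (w + 1) / w"
  proof -
    have "F w = (w * F w) / w" using w0 by simp
    thus ?thesis by (simp only: hw')
  qed
  have s1: "(w + 1) / w + 1 = 1 / w" using w0 by (simp add: field_simps c2)
  have FFw: "F (F w) = 1 / (w + 1)"
  proof -
    have "F (F w) = F ((w + 1) / w)" by (simp only: Fw')
    also have "\<dots> = (F w + 1) / F w" by (simp only: Fdiv Fadd F1)
    also have "\<dots> = ((w + 1) / w + 1) / ((w + 1) / w)" by (simp only: Fw')
    also have "\<dots> = (1 / w) / ((w + 1) / w)" by (simp only: s1)
    also have "\<dots> = 1 / (w + 1)" using w0 w10 by (simp add: field_simps)
    finally show ?thesis .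
  qed
  have FFFw: "F (F (F w)) = w"
  proof -
    have "F (F (F w)) = F (1 / (w + 1))" by (simp only: FFw)
    also have "\<dots> = 1 / (F w + 1)" by (simp only: Fdiv Fadd F1)
    also have "\<dots> = 1 / ((w + 1) / w + 1)" by (simp only: Fw')
    also have "\<dots> = 1 / (1 / w)" by (simp only: s1)
    also have "\<dots> = w" by simp
    finally show ?thesis .
  qed
  have Fww: "F w = w" using F4[of w] FFFw by simp
  have ww: "w * w + w + 1 = 0" using hw Fww by simp
  have w2: "w * w = w + 1"
  proof -
    have "w * w = (w * w + w + 1) + (w + 1)" by (simp add: algebra_simps c2)
    thus ?thesis using ww by simp
  qed
  have w3: "w * w * w = 1"
  proof -
    have "w * w * w = (w + 1) * w" by (simp only: w2)
    also have "\<dots> = w * w + w" by (simp add: algebra_simps)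
    also have "\<dots> = (w + w) + 1" by (simp only: w2 ac_simps)
    also have "\<dots> = 1" by (simp only: pp add_0)
    finally show ?thesis .
  qed
  define m where "m = w * a / b"
  have t0: "t \<noteq> 0" unfolding t_def using a0 b0 by simp
  have Fzm: "F z = m * z"
  proof -
    have wz: "w * z = t * F z" using z0 by (simp add: w_def)
    have "F z = (t * F z) / t" using t0 by simp
    also have "\<dots> = (w * z) / t" by (simp only: wz)
    also have "\<dots> = m * z" unfolding m_def t_def using a0 b0 by (simp add: field_simps)
    finally show ?thesis .
  qed
  have Fb0: "F b \<noteq> 0" using b0 Fz by simp
  have FFb: "F (F b) = b" unfolding b_def Fadd using F4 by (simp add: add.commute)
  have norm: "m * F m * F (F m) * F (F (F m)) = 1"
  proof -
    have "F (F (F (F z))) = F (F (F m)) * (F (F m) * (F m * (m * z)))"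
      using Fzm Fmul by simp
    hence "z = F (F (F m)) * (F (F m) * (F m * (m * z)))" using F4[of z] by simp
    also have "\<dots> = (m * F m * F (F m) * F (F (F m))) * z" by (simp add: ac_simps)
    finally have "z = (m * F m * F (F m) * F (F (F m))) * z" .
    thus ?thesis using z0 by (metis mult_cancel_right2)
  qed
  define c where "c = a * F (F a) / (b * F b)"
  have Fc: "F c = F a * F (F (F a)) / (F b * b)"
    unfolding c_def Fdiv Fmul FFb ..
  have cFc: "F c = c + 1"
  proof -
    have id: "a * F (F a) + F a * F (F (F a)) = b * F b"
      unfolding a_def b_def Fadd F4 by (simp add: algebra_simps c2)
    have "c + 1 = (a * F (F a) + b * F b) / (b * F b)"
      unfolding c_def using b0 Fb0 by (simp add: field_simps)
    also have "a * F (F a) + b * F b = F a * F (F (F a))"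
      using id by (metis add.assoc add.commute add.left_neutral pp)
    finally show ?thesis unfolding Fc by (simp add: mult.commute)
  qed
  have Fm: "F m = w * F a / F b" unfolding m_def Fdiv Fmul Fww ..
  have FFm: "F (F m) = w * F (F a) / b" unfolding Fm Fdiv Fmul Fww FFb ..
  have FFFm: "F (F (F m)) = w * F (F (F a)) / F b" unfolding FFm Fdiv Fmul Fww ..
  have "m * F m * F (F m) * F (F (F m)) = m * (w * F a / F b) * (w * F (F a) / b) * (w * F (F (F a)) / F b)"
    by (subst FFFm, subst FFm, subst Fm, rule refl)
  also have "\<dots> = (w * a / b) * (w * F a / F b) * (w * F (F a) / b) * (w * F (F (F a)) / F b)"
    by (simp only: m_def)
  also have "\<dots> = (w*w*w) * w * ((a * F (F a) / (b * F b)) * (F a * F (F (F a)) / (F b * b)))"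
    using b0 Fb0 by (simp add: field_simps)
  also have "\<dots> = (w*w*w) * w * (c * F c)" by (subst Fc, simp only: c_def)
  finally have "m * F m * F (F m) * F (F (F m)) = (w*w*w) * w * (c * F c)" .
  hence "w * (c * F c) = 1" using norm w3 by simp
  hence "w * w * w * (c * F c) = w * w" by (metis mult.assoc mult.right_neutral)
  hence "c * F c = w * w" using w3 by simp
  hence "c * c + c = w * w" using cFc by (simp add: algebra_simps)
  with ww Fww cFc show ?thesis by blast
qed

end

context frob4 begin

lemma construct:
  assumes a4: "a*a*a*a = a + 1" and Fa: "F a = a + 1" and Fl: "F l + l = a"
    and z0: "z \<noteq> 0" and Fzm: "F z = (a*a + a) * a * z"
  shows "\<exists>x y. (x \<noteq> 0 \<or> y \<noteq> 0) \<and> F (l*x) + F (F (l*y)) = l * (F x + F (F y))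
      \<and> F (F (l*x)) + F (l*y) + F (F (l*y)) = l * (F (F x) + F y + F (F y))"
proof -
  have a0: "a \<noteq> 0" using a4 by auto
  have a10: "a + 1 \<noteq> 0" using Fa a0 Fz by metis
  define y where "y = F (F (F z))"
  define x where "x = F (F (F (F z / a)))"
  have Fy: "F y = z" unfolding y_def using F4 by simp
  have Fx: "F x = F z / a" unfolding x_def using F4 by simp
  have FFl: "F (F l) = l + 1"
  proof -
    have "F l = a + l" using Fl by (metis add.commute add.left_commute add_0 pp add.assoc)
    hence "F (F l) = F a + F l" by (simp add: Fadd)
    also have "\<dots> = (a + 1) + (a + l)" using Fa \<open>F l = a + l\<close> by simp
    also have "\<dots> = l + 1" by (simp add: algebra_simps c2)
    finally show ?thesis .
  qed
  have Fl': "F l = l + a" using Fl by (metis add.commute add.left_commute add_0 pp add.assoc)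
  have FFz: "F (F z) = ((a+1)*(a+1) + (a+1)) * (a+1) * ((a*a + a) * a * z)"
    using Fzm by (simp add: Fmul Fadd Fa F1)
  have key: "((a+1)*(a+1)+(a+1)) * ((a*a+a)*a*z) + a*z + (a*a+a)*a*z = 0"
  proof -
    have "((a+1)*(a+1)+(a+1)) * ((a*a+a)*a*z) + a*z + (a*a+a)*a*z = a * z * (a*a*a*a + a + 1)"
      by (simp add: algebra_simps c2)
    also have "\<dots> = 0" using a4 by (simp add: c2)
    finally show ?thesis .
  qed
  have E1: "F (l*x) + F (F (l*y)) = l * (F x + F (F y))"
  proof -
    have h1: "F (l*x) = (l + a) * (F z / a)" by (simp only: Fmul Fx Fl')
    have h2: "F (F (l*y)) = (l + 1) * F z" by (simp only: Fmul FFl Fy)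
    have "F (l*x) + F (F (l*y)) + l * (F x + F (F y)) = (l + a) * (F z / a) + (l + 1) * F z + l * (F z / a + F z)"
      by (simp only: h1 h2 Fx Fy)
    also have "\<dots> = (a + a) * F z" using a0 by (simp add: field_simps c2)
    also have "\<dots> = 0" by (simp add: pp)
    finally show ?thesis using ae by simp
  qed
  have E2: "F (F (l*x)) + F (l*y) + F (F (l*y)) = l * (F (F x) + F y + F (F y))"
  proof -
    have FFx: "F (F x) = F (F z) / (a + 1)" using Fx by (simp add: Fdiv Fa)
    have "F (F (l*x)) + F (l*y) + F (F (l*y)) + l * (F (F x) + F y + F (F y))
       = (l + 1) * (F (F z) / (a+1)) + (l + a) * z + (l + 1) * F z + l * (F (F z) / (a+1) + z + F z)"
    proof -
      have h1: "F (F (l*x)) = (l + 1) * (F (F z) / (a+1))" by (simp only: Fmul FFl FFx)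
      have h2: "F (l*y) = (l + a) * z" by (simp only: Fmul Fl' Fy)
      have h3: "F (F (l*y)) = (l + 1) * F z" by (simp only: Fmul FFl Fy)
      show ?thesis by (subst h3, subst h1, subst h2, simp only: FFx Fy)
    qed
    also have "\<dots> = F (F z) / (a+1) + a * z + F z + (l + l) * (F (F z) / (a+1) + z + F z)"
    proof -
      have gen: "\<And>D E. (l + 1) * D + (l + a) * z + (l + 1) * E + l * (D + z + E) = D + a * z + E + (l + l) * (D + z + E)"
        by (simp add: algebra_simps)
      show ?thesis by (rule gen)
    qed
    also have "\<dots> = F (F z) / (a+1) + a * z + F z" by (simp add: pp)
    also have "\<dots> = ((a+1)*(a+1)+(a+1)) * ((a*a+a)*a*z) + a*z + (a*a+a)*a*z"
      using a10 by (subst FFz, subst Fzm, simp)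
    also have "\<dots> = 0" by (rule key)
    finally show ?thesis using ae by simp
  qed
  have "y \<noteq> 0" using Fy z0 F0 by auto
  thus ?thesis using E1 E2 by blast
qed

end

lemma frob4_pow:
  assumes card: "CARD('a::{field,finite}) = q ^ 4" and q: "q = 2 ^ h"
  shows "frob4 (\<lambda>x::'a. x ^ q)"
proof
  have c2: "(2::'a) = 0" using card q char2_of_card[of "h*4"] by (simp add: power_mult)
  show "(2::'a) = 0" by (rule c2)
  show "(a + b) ^ q = a ^ q + b ^ q" for a b :: 'a using char2_pow2_add[OF c2] q by simp
  show "(a * b) ^ q = a ^ q * b ^ q" for a b :: 'a by (simp add: power_mult_distrib)
  show "(1::'a) ^ q = 1" by simp
  show "(((x ^ q) ^ q) ^ q) ^ q = x" for x :: 'a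
    using frob_card[of x] card by (simp add: power_mult[symmetric] power4_eq_xxxx power2_eq_square mult.assoc)
qed

lemma pow_iter: "(x::'a::monoid_mult) ^ p = x \<Longrightarrow> x ^ (p ^ k) = x"
proof (induction k)
  case 0 then show ?case by simp
next
  case (Suc k)
  have "x ^ (p ^ Suc k) = (x ^ (p ^ k)) ^ p" by (simp add: power_mult[symmetric] mult.commute)
  also have "\<dots> = x" using Suc by simp
  finally show ?case .
qed

lemma pow_q2: "(v::'a::monoid_mult) ^ (q^2) = (v ^ q) ^ q"
  by (simp add: power2_eq_square power_mult)

lemma scattered_core:
  fixes l x y :: "'a::{field,finite}"
  assumes card: "CARD('a) = q ^ 4" and q: "q = 2 ^ h" and h1: "h \<ge> 1" and hm: "h mod 4 \<noteq> 2"
    and E1: "(l*x)^q + (l*y)^(q^2) = l * (x^q + y^(q^2))"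
    and E2: "(l*x)^(q^2) + (l*y)^q + (l*y)^(q^2) = l * (x^(q^2) + y^q + y^(q^2))"
    and nz: "x \<noteq> 0 \<or> y \<noteq> 0"
  shows "l ^ q = l"
proof (rule ccontr)
  assume nl: "l ^ q \<noteq> l"
  interpret frob4 "\<lambda>x::'a. x ^ q" by (rule frob4_pow[OF card q])
  obtain w c :: 'a where ww: "w*w + w + 1 = 0" and Fw: "w ^ q = w" and cc: "c*c + c = w*w"
    and Fc: "c ^ q = c + 1"
    using key[of l x y] E1 E2 nz nl unfolding pow_q2 by blast
  have w2: "w * w = w + 1"
  proof -
    have "w * w = (w * w + w + 1) + (w + 1)" by (simp add: algebra_simps c2)
    thus ?thesis using ww by simp
  qed
  have w0: "w \<noteq> 0" using ww by auto
  have w3: "w * w * w = 1" using w2 by (simp add: algebra_simps c2)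
  have w4: "w ^ 4 = w" using w3 by (simp add: power4_eq_xxxx)
  show False
  proof (cases "odd h")
    case True
    then obtain k where hk: "h = 2 * k + 1" by (metis oddE)
    have "q = 4 ^ k * 2" using q hk by (simp add: power_add power_mult)
    hence "w ^ q = (w ^ (4 ^ k)) ^ 2" by (simp add: power_mult)
    also have "\<dots> = w ^ 2" using pow_iter[OF w4] by simp
    finally have "w ^ 2 = w" using Fw by simp
    hence "w * w = w * 1" by (simp add: power2_eq_square)
    hence "w = 1" using w0 by simp
    thus False using ww c2 by (simp add: algebra_simps)
  next
    case False
    hence "h mod 4 = 0" using hm by presburger
    then obtain k where hk: "h = 4 * k" by auto
    have "q = 16 ^ k" using q hk by (simp add: power_mult)
    have c2': "c * c = c + w * w"
    proof -
      have "c * c = (c * c + c) + c" using pp[of c] by (simp add: add.assoc)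
      also have "\<dots> = w * w + c" by (simp only: cc)
      finally show ?thesis by (simp only: add.commute)
    qed
    have sq: "(u + v) ^ 2 = u ^ 2 + v ^ 2" for u v :: 'a
      using char2_pow2_add[OF c2, of u v 1] by simp
    have c4: "c ^ 4 = c + 1"
    proof -
      have "c ^ 4 = (c * c) ^ 2" by (simp add: power4_eq_xxxx power2_eq_square)
      also have "\<dots> = (c + w * w) ^ 2" by (simp only: c2')
      also have "\<dots> = c ^ 2 + (w * w) ^ 2" by (rule sq)
      also have "(w * w) ^ 2 = w" using w4 by (simp add: power4_eq_xxxx power2_eq_square mult.assoc)
      also have "c ^ 2 = c + w * w" using c2' by (simp add: power2_eq_square)
      also have "c + w * w + w = c + 1" using w2 by (simp add: algebra_simps c2)
      finally show ?thesis .
    qed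
    have "c ^ 16 = (c ^ 4) ^ 4" by (simp flip: power_mult)
    also have "\<dots> = (c + 1) ^ 4" by (simp only: c4)
    also have "\<dots> = c ^ 4 + 1" using char2_pow2_add[OF c2, of c 1 2] by simp
    also have "\<dots> = c" using c4 by (simp add: algebra_simps c2)
    finally have "c ^ 16 = c" .
    hence "c ^ q = c" using pow_iter[of c 16 k] \<open>q = 16 ^ k\<close> by simp
    thus False using Fc by simp
  qed
qed

lemma hilbert90_mult:
  fixes m :: "'a::{field,finite}"
  assumes card: "CARD('a) = q ^ 4" and q: "q = 2 ^ h" and h1: "h \<ge> 1"
    and N: "m * m^q * (m^q)^q * ((m^q)^q)^q = 1"
  shows "\<exists>z::'a. z \<noteq> 0 \<and> z^q = m * z"
proof -
  interpret frob4 "\<lambda>x::'a. x ^ q" by (rule frob4_pow[OF card q])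
  have q2: "q \<ge> 2" using q h1 by (metis one_le_numeral power_increasing power_one_right)
  define m1 where "m1 = m^q"
  define m2 where "m2 = m1^q"
  define m3 where "m3 = m2^q"
  define L where "L = (\<lambda>z::'a. z^q + m * z)"
  define M where "M = (\<lambda>y::'a. (m1*m2*m3) * y + (m2*m3) * y^q + m3 * (y^q)^q + ((y^q)^q)^q)"
  have Nm: "m * m1 * m2 * m3 = 1" using N unfolding m1_def m2_def m3_def .
  have MLz: "M (L z) = 0" for z
  proof -
    have "M (L z) = (m * m1 * m2 * m3 + 1) * z"
      unfolding M_def L_def m3_def m2_def m1_def
      using F4[of z] by (simp add: Fadd Fmul algebra_simps c2)
    also have "\<dots> = 0" using Nm by (simp add: c2)
    finally show ?thesis .
  qed
  have cardM: "card {y. M y = 0} \<le> q ^ 3"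
  proof -
    define cs where "cs = (\<lambda>i::nat. if i = 0 then m1*m2*m3 else if i = 1 then m2*m3 else if i = 2 then m3 else (1::'a))"
    have "card {y::'a. (\<Sum>i\<in>{0::nat,1,2,3}. cs i * y ^ (q ^ i)) = 0} \<le> q ^ 3"
    proof (rule root_bound[where j=3])
      show "\<forall>i\<in>{0::nat,1,2,3}. i \<noteq> 3 \<longrightarrow> q ^ i \<noteq> q ^ 3"
        using q2 by (simp add: power_inject_exp)
      show "\<forall>i\<in>{0::nat,1,2,3}. q ^ i \<le> q ^ 3"
        using q2 by (auto intro: power_increasing)
    qed (auto simp: cs_def)
    moreover have "(\<Sum>i\<in>{0::nat,1,2,3}. cs i * y ^ (q ^ i)) = M y" for y
      unfolding M_def cs_def by (simp add: power_mult[symmetric] power2_eq_square power3_eq_cube algebra_simps)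
    ultimately show ?thesis by simp
  qed
  have "range L \<subseteq> {y. M y = 0}" using MLz by auto
  hence "card (range L) \<le> q ^ 3" using cardM by (meson card_mono finite order_trans)
  moreover have "q ^ 3 < q ^ 4" using q2 by (simp add: power_strict_increasing)
  ultimately have "range L \<noteq> UNIV" using card by (metis not_le order_refl)
  hence "\<not> inj L" using finite_UNIV_inj_surj[of L] by auto
  then obtain z1 z2 where z12: "z1 \<noteq> z2" "L z1 = L z2" unfolding inj_def by auto
  have Ladd: "L (u + v) = L u + L v" for u v unfolding L_def by (simp add: Fadd algebra_simps)
  have "L (z1 + z2) = 0" using z12 Ladd pp by simp
  moreover have "z1 + z2 \<noteq> 0" using z12 ae by simp
  ultimately show ?thesis unfolding L_def using ae by blast
qed

lemma unscattered_core:
  assumes card: "CARD('a::{field,finite}) = q ^ 4" and q: "q = 2 ^ h" and h1: "h \<ge> 1" and hm: "h mod 4 = 2"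
  shows "\<exists>l x y::'a. l ^ q \<noteq> l \<and> (x \<noteq> 0 \<or> y \<noteq> 0) \<and>
     (l*x)^q + (l*y)^(q^2) = l * (x^q + y^(q^2)) \<and>
     (l*x)^(q^2) + (l*y)^q + (l*y)^(q^2) = l * (x^(q^2) + y^q + y^(q^2))"
proof -
  interpret frob4 "\<lambda>x::'a. x ^ q" by (rule frob4_pow[OF card q])
  have e4: "(4::nat) ^ (2*h) = 2 ^ (h * 4)"
  proof -
    have "(4::nat) ^ (2*h) = (2^2)^(2*h)" by simp
    also have "\<dots> = 2 ^ (2*(2*h))" by (simp only: power_mult)
    finally show ?thesis by (simp add: mult.commute)
  qed
  have card4: "CARD('a) = 4 ^ (2*h)"
  proof -
    have "CARD('a) = (2^h)^4" using card q by simp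
    also have "\<dots> = 2^(h*4)" by (simp only: power_mult)
    finally show ?thesis using e4 by simp
  qed
  have AS: "card {x::'a. x ^ 4 = x} = 4 \<and> range (\<lambda>x::'a. x ^ 4 + x) = {y. (\<Sum>i<2*h. y ^ (4^i)) = 0}"
    by (rule artin_schreier[OF card4, of 2]) (use h1 in auto)
  have s1: "(\<Sum>i<2*h. (1::'a) ^ (4^i)) = 0" using c2 by simp
  have r1: "range (\<lambda>x::'a. x ^ 4 + x) = {y. (\<Sum>i<2*h. y ^ (4^i)) = 0}" using AS by (rule conjunct2)
  have "(1::'a) \<in> range (\<lambda>x::'a. x ^ 4 + x)" unfolding r1 using s1 by simp
  then obtain a :: 'a where a41': "1 = a ^ 4 + a" by (rule rangeE)
  note a41 = a41'[symmetric]
  have a4p: "a ^ 4 = a + 1"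
  proof -
    have "a ^ 4 = a ^ 4 + (a + a)" using pp[of a] by simp
    also have "\<dots> = (a ^ 4 + a) + a" by (simp only: add.assoc)
    also have "\<dots> = 1 + a" by (simp only: a41)
    finally show ?thesis by (simp only: add.commute)
  qed
  have a4: "a*a*a*a = a + 1" using a4p by (simp add: power4_eq_xxxx)
  have a16: "a ^ 16 = a"
  proof -
    have "a ^ 16 = (a ^ 4) ^ 4" by (simp flip: power_mult)
    also have "\<dots> = (a + 1) ^ 4" by (simp only: a4p)
    also have "\<dots> = a ^ 4 + 1" using char2_pow2_add[OF c2, of a 1 2] by simp
    also have "\<dots> = a" using a4p c2 by (simp add: add.assoc)
    finally show ?thesis .
  qed
  obtain k where hk: "h = 4 * k + 2" using hm by (metis div_mult_mod_eq add.commute mult.commute)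
  have "q = 16 ^ k * 4" using q hk by (simp add: power_add power_mult)
  hence Fa: "a ^ q = a + 1" using pow_iter[OF a16, of k] a4p by (simp add: power_mult)
  have FFa: "(a ^ q) ^ q = a"
    using Fa Fadd[of a 1] pp by (simp add: add.assoc)
  have card4': "CARD('a) = q ^ 4" by (rule card)
  have h': "q = 2 ^ h" by (rule q)
  have AS2: "card {x::'a. x ^ q = x} = q \<and> range (\<lambda>x::'a. x ^ q + x) = {y. (\<Sum>i<4. y ^ (q^i)) = 0}"
    by (rule artin_schreier[OF card4' h' h1]) simp
  have s2: "(\<Sum>i<4. a ^ (q^i)) = 0"
  proof -
    have "(\<Sum>i<4. a ^ (q^i)) = a + a ^ q + (a ^ q) ^ q + ((a ^ q) ^ q) ^ q"
      by (simp add: eval_nat_numeral power_mult[symmetric] algebra_simps)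
    also have "\<dots> = 0" using Fa FFa by (simp add: algebra_simps c2)
    finally show ?thesis .
  qed
  have r2: "range (\<lambda>x::'a. x ^ q + x) = {y. (\<Sum>i<4. y ^ (q^i)) = 0}" using AS2 by (rule conjunct2)
  have "a \<in> range (\<lambda>x::'a. x ^ q + x)" unfolding r2 using s2 by simp
  then obtain l :: 'a where Fl': "a = l ^ q + l" by (rule rangeE)
  note Fl = Fl'[symmetric]
  define m where "m = (a*a + a) * a"
  have Fm: "m ^ q = ((a+1)*(a+1) + (a+1)) * (a+1)"
    unfolding m_def by (simp add: Fadd Fmul Fa)
  have FFm: "(m ^ q) ^ q = m"
    unfolding Fm m_def by (simp add: Fadd Fmul Fa FFa c2)
  have mm1: "m * m ^ q = 1"
  proof -
    have "m * m ^ q = (a * (a + 1)) * (a * (a + 1)) * (a * (a + 1))"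
      by (subst Fm) (simp add: m_def algebra_simps c2)
    also have "\<dots> = 1"
    proof -
      define w where "w = a * (a + 1)"
      have "w * w = a*a*a*a + a * a" unfolding w_def by (simp add: algebra_simps c2)
      also have "\<dots> = w + 1" unfolding a4 w_def by (simp add: algebra_simps)
      finally have ww: "w * w = w + 1" .
      have "w * w * w = (w + 1) * w" by (simp only: ww)
      also have "\<dots> = w * w + w" by (simp add: algebra_simps)
      also have "\<dots> = 1" unfolding ww by (simp add: algebra_simps c2)
      finally show ?thesis unfolding w_def .
    qed
    finally show ?thesis .
  qed
  have N: "m * m ^ q * (m ^ q) ^ q * ((m ^ q) ^ q) ^ q = 1"
  proof -
    have "m * m ^ q * (m ^ q) ^ q * ((m ^ q) ^ q) ^ q = m * m ^ q * m * m ^ q" by (simp only: FFm)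
    also have "\<dots> = (m * m ^ q) * (m * m ^ q)" by (simp only: mult.assoc)
    also have "\<dots> = 1" by (simp only: mm1 mult_1)
    finally show ?thesis .
  qed
  obtain z :: 'a where z0: "z \<noteq> 0" and Fz: "z ^ q = m * z"
    using hilbert90_mult[OF card q h1 N] by blast
  have "\<exists>x y. (x \<noteq> 0 \<or> y \<noteq> 0) \<and> (l*x)^q + ((l*y)^q)^q = l * (x^q + (y^q)^q)
      \<and> ((l*x)^q)^q + (l*y)^q + ((l*y)^q)^q = l * ((x^q)^q + y^q + (y^q)^q)"
    using construct[of a l z] a4 Fa Fl z0 Fz unfolding m_def by simp
  moreover have "l ^ q \<noteq> l"
  proof
    assume "l ^ q = l"
    hence "a = 0" using Fl pp by simp
    thus False using a4 by simp
  qed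
  ultimately show ?thesis unfolding pow_q2 by blast
qed

definition subf :: "'a::field set \<Rightarrow> bool" where
  "subf K \<longleftrightarrow> 0 \<in> K \<and> 1 \<in> K \<and> (\<forall>a\<in>K. \<forall>b\<in>K. a + b \<in> K \<and> a * b \<in> K \<and> -a \<in> K \<and> a / b \<in> K)"

definition comb :: "('a::field ^ 'n \<Rightarrow> 'a) \<Rightarrow> ('a ^ 'n) set \<Rightarrow> 'a ^ 'n" where
  "comb c S = (\<Sum>s\<in>S. smultv (c s) s)"

lemma comb_comp: "comb c S $ i = (\<Sum>s\<in>S. c s * s $ i)"
  unfolding comb_def smultv_def by simp

lemma smultv_comp: "smultv c v $ i = c * v $ i" unfolding smultv_def by simp

lemma indep_iff: "Fq_indep q S \<longleftrightarrow> finite S \<and> (\<forall>c. (\<forall>s\<in>S. c s \<in> Fq q) \<longrightarrow> comb c S = 0 \<longrightarrow> (\<forall>s\<in>S. c s = 0))"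
  unfolding Fq_indep_def comb_def ..

lemma span_in:
  assumes W: "Fq_subspace q W" and fin: "finite S" and SW: "S \<subseteq> W" and c: "\<forall>s\<in>S. c s \<in> Fq q"
  shows "comb c S \<in> W"
  using fin SW c
proof (induction S rule: finite_induct)
  case empty then show ?case using W unfolding Fq_subspace_def comb_def by simp
next
  case (insert x F)
  have "comb c (insert x F) = smultv (c x) x + comb c F"
    unfolding comb_def using insert.hyps by simp
  moreover have "smultv (c x) x \<in> W" using W insert.prems unfolding Fq_subspace_def by auto
  moreover have "comb c F \<in> W" using insert by auto
  ultimately show ?case using W unfolding Fq_subspace_def by auto
qed

lemma comb_diff: "comb (\<lambda>s. c s - d s) S = comb c S - comb d S"
  by (simp add: vec_eq_iff comb_comp sum_subtractf left_diff_distrib)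

lemma subf_diff: "subf K \<Longrightarrow> a \<in> K \<Longrightarrow> b \<in> K \<Longrightarrow> a - b \<in> K"
  unfolding subf_def by (metis diff_conv_add_uminus)

lemma indep_bound:
  fixes W :: "('a::{field,finite} ^ 'n) set"
  assumes sf: "subf (Fq q :: 'a set)" and cq: "card (Fq q :: 'a set) = q" and W: "Fq_subspace q W"
    and ind: "Fq_indep q S" and SW: "S \<subseteq> W"
  shows "q ^ card S \<le> card W"
proof -
  have fin: "finite S" using ind unfolding indep_iff by simp
  let ?P = "PiE S (\<lambda>_. Fq q :: 'a set)"
  have inj: "inj_on (\<lambda>c. comb c S) ?P"
  proof (rule inj_onI)
    fix c d assume c: "c \<in> ?P" and d: "d \<in> ?P" and eq: "comb c S = comb d S"
    have h1: "comb (\<lambda>s. c s - d s) S = 0" using eq comb_diff[of c d S] by simp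
    have h2: "\<forall>s\<in>S. c s - d s \<in> Fq q" using c d sf subf_diff by (metis PiE_mem)
    have H: "\<And>e. (\<forall>s\<in>S. e s \<in> Fq q) \<Longrightarrow> comb e S = 0 \<Longrightarrow> \<forall>s\<in>S. e s = 0"
      using ind unfolding indep_iff by blast
    have "\<forall>s\<in>S. c s - d s = 0" using H[of "\<lambda>s. c s - d s"] h1 h2 by blast
    thus "c = d" using c d by (intro PiE_ext) auto
  qed
  have sub: "(\<lambda>c. comb c S) ` ?P \<subseteq> W"
    using span_in[OF W fin SW] by (auto simp: PiE_mem)
  have "card ?P \<le> card W"
    using card_inj_on_le[OF inj sub] by simp
  moreover have "card ?P = q ^ card S" using fin cq by (simp add: card_PiE)
  ultimately show ?thesis by simp
qed

lemma indep_extend: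
  fixes W :: "('a::{field,finite} ^ 'n) set"
  assumes sf: "subf (Fq q :: 'a set)" and W: "Fq_subspace q W"
    and ind: "Fq_indep q S" and SW: "S \<subseteq> W"
    and wn: "w \<notin> (\<lambda>c. comb c S) ` PiE S (\<lambda>_. Fq q)"
  shows "w \<notin> S \<and> Fq_indep q (insert w S)"
proof -
  have fin: "finite S" using ind unfolding indep_iff by simp
  have K0: "(0::'a) \<in> Fq q" and K1: "(1::'a) \<in> Fq q" using sf unfolding subf_def by auto
  have wS: "w \<notin> S"
  proof
    assume "w \<in> S"
    define c where "c = (\<lambda>t. if t \<in> S then (if t = w then 1 else 0) else (undefined::'a))"
    have "c \<in> PiE S (\<lambda>_. Fq q)" unfolding c_def using K0 K1 by (auto simp: PiE_def extensional_def)
    moreover have "comb c S = w"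
    proof -
      have "comb c S = (\<Sum>s\<in>S. if s = w then s else 0)"
        unfolding comb_def c_def by (intro sum.cong) (auto simp: smultv_def vec_eq_iff)
      also have "\<dots> = w" using \<open>w \<in> S\<close> fin by (simp add: sum.delta)
      finally show ?thesis .
    qed
    ultimately show False using wn by (metis image_eqI)
  qed
  have "Fq_indep q (insert w S)"
    unfolding indep_iff
  proof (intro conjI allI impI)
    show "finite (insert w S)" using fin by simp
    fix c assume cK: "\<forall>s\<in>insert w S. c s \<in> Fq q" and c0: "comb c (insert w S) = 0"
    have split: "comb c (insert w S) = smultv (c w) w + comb c S"
      unfolding comb_def using fin wS by simp
    have cw: "c w = 0"
    proof (rule ccontr)
      assume cw0: "c w \<noteq> 0"
      define d where "d = (\<lambda>t. if t \<in> S then - c t / c w else (undefined::'a))"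
      have "d \<in> PiE S (\<lambda>_. Fq q)"
        unfolding d_def using cK sf unfolding subf_def by (auto simp: PiE_def extensional_def)
      moreover have "comb d S = w"
      proof -
        have "w $ i = (\<Sum>s\<in>S. d s * s $ i)" for i
        proof -
          have "(smultv (c w) w + comb c S) $ i = 0" using c0 split by simp
          hence "c w * w $ i + (\<Sum>s\<in>S. c s * s $ i) = 0"
            by (simp only: plus_vec_def vec_lambda_beta comb_comp smultv_comp)
          hence "c w * w $ i = - (\<Sum>s\<in>S. c s * s $ i)" by (simp add: eq_neg_iff_add_eq_0)
          hence "w $ i = - (\<Sum>s\<in>S. c s * s $ i) / c w" using cw0 by (simp add: field_simps)
          also have "\<dots> = (\<Sum>s\<in>S. (- c s / c w) * s $ i)"
            by (simp add: sum_divide_distrib sum_negf)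
          also have "\<dots> = (\<Sum>s\<in>S. d s * s $ i)" unfolding d_def by (intro sum.cong) auto
          finally show ?thesis .
        qed
        thus ?thesis unfolding vec_eq_iff comb_comp by simp
      qed
      ultimately show False using wn by (metis image_eqI)
    qed
    hence "comb c S = 0" using c0 split by (simp add: smultv_def vec_eq_iff)
    hence "\<forall>s\<in>S. c s = 0" using ind cK unfolding indep_iff by blast
    thus "\<forall>s\<in>insert w S. c s = 0" using cw by simp
  qed
  with wS show ?thesis by simp
qed

lemma dim_eq:
  fixes W :: "('a::{field,finite} ^ 'n) set"
  assumes sf: "subf (Fq q :: 'a set)" and cq: "card (Fq q :: 'a set) = q" and q2: "q \<ge> 2"
    and W: "Fq_subspace q W" and cW: "card W = q ^ N"
  shows "Fq_dim q W = N"
proof -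
  have ex: "\<exists>S. S \<subseteq> W \<and> Fq_indep q S \<and> card S = k" if "k \<le> N" for k
    using that
  proof (induction k)
    case 0
    have "Fq_indep q {}" unfolding indep_iff by simp
    then show ?case by auto
  next
    case (Suc k)
    then obtain S where S: "S \<subseteq> W" "Fq_indep q S" "card S = k" by auto
    have fin: "finite S" using S unfolding indep_iff by simp
    let ?sp = "(\<lambda>c. comb c S) ` PiE S (\<lambda>_. Fq q :: 'a set)"
    have "card ?sp \<le> card (PiE S (\<lambda>_. Fq q :: 'a set))" by (rule card_image_le) (simp add: fin)
    also have "\<dots> = q ^ k" using fin cq S by (simp add: card_PiE)
    also have "\<dots> < q ^ N" using Suc.prems q2 by (simp add: power_strict_increasing)
    finally have "card ?sp < card W" using cW by simp
    hence "\<not> W \<subseteq> ?sp" by (meson card_mono finite leD)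
    then obtain w where w: "w \<in> W" "w \<notin> ?sp" by auto
    have "w \<notin> S \<and> Fq_indep q (insert w S)" by (rule indep_extend[OF sf W S(2) S(1) w(2)])
    moreover have "card (insert w S) = Suc k" using calculation fin S by simp
    ultimately show ?case using S w by blast
  qed
  let ?C = "card ` {S. S \<subseteq> W \<and> Fq_indep q S}"
  have finC: "finite ?C" by simp
  have "N \<in> ?C" using ex[of N] by auto
  hence ge: "N \<le> Max ?C" using finC by (rule Max_ge[rotated])
  have le: "Max ?C \<le> N"
  proof (rule Max.boundedI)
    show "finite ?C" by simp
    show "?C \<noteq> {}" using \<open>N \<in> ?C\<close> by auto
    fix n assume "n \<in> ?C"
    then obtain S where S: "S \<subseteq> W" "Fq_indep q S" "n = card S" by auto
    have "q ^ n \<le> q ^ N" using indep_bound[OF sf cq W S(2) S(1)] cW S(3) by simp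
    thus "n \<le> N" using q2 by (simp add: power_le_imp_le_exp)
  qed
  show ?thesis unfolding Fq_dim_def using ge le by simp
qed

lemma smultv_0[simp]: "smultv 0 v = 0" by (simp add: smultv_def vec_eq_iff)
lemma smultv_1[simp]: "smultv 1 v = v" by (simp add: smultv_def vec_eq_iff)

lemma comb_two:
  assumes fin: "finite S" and u: "u1 \<in> S" "u2 \<in> S" "u1 \<noteq> u2"
    and e: "\<forall>s\<in>S. s \<noteq> u1 \<longrightarrow> s \<noteq> u2 \<longrightarrow> e s = 0"
  shows "comb e S = smultv (e u1) u1 + smultv (e u2) u2"
proof -
  have "comb e S = (\<Sum>s\<in>{u1,u2}. smultv (e s) s)"
    unfolding comb_def using fin u e by (intro sum.mono_neutral_right) auto
  also have "\<dots> = smultv (e u1) u1 + smultv (e u2) u2" using u by simp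
  finally show ?thesis .
qed

lemma comb_one:
  assumes fin: "finite S" and u: "u \<in> S"
    and e: "\<forall>s\<in>S. s \<noteq> u \<longrightarrow> e s = 0"
  shows "comb e S = smultv (e u) u"
proof -
  have "comb e S = (\<Sum>s\<in>{u}. smultv (e s) s)"
    unfolding comb_def using fin u e by (intro sum.mono_neutral_right) auto
  thus ?thesis by simp
qed

lemma indep_nonzero:
  assumes ind: "Fq_indep q S" and u: "u \<in> S" and sf: "subf (Fq q :: 'a::field set)"
  shows "u \<noteq> (0::'a^'n)"
proof
  assume u0: "u = 0"
  have fin: "finite S" using ind unfolding indep_iff by simp
  define e where "e = (\<lambda>s. if s = u then (1::'a) else 0)"
  have "\<forall>s\<in>S. e s \<in> Fq q" using sf unfolding e_def subf_def by auto
  moreover have "comb e S = 0" using comb_one[OF fin u, of e] u0 unfolding e_def by simp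
  ultimately have "\<forall>s\<in>S. e s = 0" using ind unfolding indep_iff by blast
  thus False using u unfolding e_def by auto
qed

lemma indep_not_mult:
  assumes ind: "Fq_indep q S" and u: "u1 \<in> S" "u2 \<in> S" "u1 \<noteq> u2"
    and sf: "subf (Fq q :: 'a::field set)" and l: "l \<in> Fq q" and u2: "u2 = smultv l (u1::'a^'n)"
  shows False
proof -
  have fin: "finite S" using ind unfolding indep_iff by simp
  define e where "e = (\<lambda>s. if s = u1 then l else if s = u2 then (-1::'a) else 0)"
  have "\<forall>s\<in>S. e s \<in> Fq q" using sf l unfolding e_def subf_def by auto
  moreover have "comb e S = 0"
  proof -
    have "comb e S = smultv (e u1) u1 + smultv (e u2) u2"
      by (rule comb_two[OF fin u]) (auto simp: e_def)
    also have "\<dots> = 0" using u(3) unfolding e_def u2 by (simp add: smultv_def vec_eq_iff)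
    finally show ?thesis .
  qed
  ultimately have "\<forall>s\<in>S. e s = 0" using ind unfolding indep_iff by blast
  thus False using u unfolding e_def by auto
qed

lemma vector4:
  "(vector [a,b,c,d] :: ('a::zero)^4) $ 1 = a"
  "(vector [a,b,c,d] :: ('a::zero)^4) $ 2 = b"
  "(vector [a,b,c,d] :: ('a::zero)^4) $ 3 = c"
  "(vector [a,b,c,d] :: ('a::zero)^4) $ 4 = d"
  unfolding vector_def by simp_all

lemma vec4_eq: "(v::'a^4) = w \<longleftrightarrow> v$1 = w$1 \<and> v$2 = w$2 \<and> v$3 = w$3 \<and> v$4 = w$4"
  by (metis (mono_tags, lifting) exhaust_4 vec_eq_iff)

theorem theorem4p1:
  fixes h :: nat and q :: nat and U :: "('a::{field,finite} ^ 4) set"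
  assumes "h \<ge> 1" and "q = 2 ^ h" and "CARD('a) = q ^ 4"
    and "U = {vector [x, y, x ^ q + y ^ (q^2), x ^ (q^2) + y ^ q + y ^ (q^2)] | x y. True}"
  shows "maximum_scattered q 4 U \<longleftrightarrow> h mod 4 \<noteq> 2"
proof -
  note h1 = assms(1) and q = assms(2) and card = assms(3) and Udef = assms(4)
  interpret frob4 "\<lambda>x::'a. x ^ q" by (rule frob4_pow[OF card q])
  define P where "P = (\<lambda>x y::'a. (vector [x, y, x ^ q + y ^ (q^2), x ^ (q^2) + y ^ q + y ^ (q^2)] :: 'a^4))"
  have U: "U = {P x y | x y. True}" unfolding Udef P_def ..
  have Pc: "P x y $ 1 = x" "P x y $ 2 = y" "P x y $ 3 = x ^ q + y ^ (q^2)"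
    "P x y $ 4 = x ^ (q^2) + y ^ q + y ^ (q^2)" for x y
    unfolding P_def by (simp_all only: vector4)
  have q2: "q \<ge> 2" using q h1 by (metis one_le_numeral power_increasing power_one_right)
  have addq2: "(a + b) ^ (q^2) = a ^ (q^2) + b ^ (q^2)" for a b :: 'a
    unfolding pow_q2 by (simp only: Fadd)
  have sf: "subf (Fq q :: 'a set)"
    unfolding subf_def Fq_def using q2
    by (auto simp: Fadd power_mult_distrib power_divide mm zero_power)
  have cq: "card (Fq q :: 'a set) = q"
    using artin_schreier[OF card q h1] unfolding Fq_def by simp
  have Padd: "P x y + P x' y' = P (x + x') (y + y')" for x y x' y'
    unfolding vec4_eq by (simp add: Pc Fadd addq2 algebra_simps)
  have Psm: "smultv c (P x y) = P (c * x) (c * y)" if "c ^ q = c" for c x y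
  proof -
    have cq2: "c ^ (q^2) = c" unfolding pow_q2 using that by simp
    show ?thesis unfolding vec4_eq smultv_comp Pc
      by (simp add: power_mult_distrib that cq2 algebra_simps)
  qed
  have P0: "P 0 0 = 0" unfolding vec4_eq using q2 by (simp add: Pc zero_power)
  have Pinj: "P x y = P x' y' \<Longrightarrow> x = x' \<and> y = y'" for x y x' y'
    by (metis Pc(1) Pc(2))
  have Pnz: "P x y \<noteq> 0" if "x \<noteq> 0 \<or> y \<noteq> 0" for x y
    using that Pinj P0 by metis
  have sub: "Fq_subspace q U"
    unfolding Fq_subspace_def U
  proof (intro conjI ballI)
    show "0 \<in> {P x y |x y. True}" using P0 by (metis (mono_tags, lifting) mem_Collect_eq)
    fix u v assume "u \<in> {P x y |x y. True}" "v \<in> {P x y |x y. True}"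
    then obtain x y x' y' where "u = P x y" "v = P x' y'" by auto
    hence "u + v = P (x + x') (y + y')" using Padd by simp
    thus "u + v \<in> {P x y |x y. True}" by blast
  next
    fix c :: 'a and u assume c: "c \<in> Fq q" and "u \<in> {P x y |x y. True}"
    then obtain x y where "u = P x y" by auto
    hence "smultv c u = P (c * x) (c * y)" using Psm c unfolding Fq_def by simp
    thus "smultv c u \<in> {P x y |x y. True}" by blast
  qed
  have cardU: "card U = q ^ 8"
  proof -
    have "U = (\<lambda>(x, y). P x y) ` UNIV" unfolding U by auto
    moreover have "inj (\<lambda>(x, y). P x y)" using Pinj by (auto intro!: injI)
    ultimately have "card U = card (UNIV :: ('a \<times> 'a) set)" by (simp add: card_image)
    also have "\<dots> = CARD('a) * CARD('a)" by (simp add: card_cartesian_product flip: UNIV_Times_UNIV)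
    also have "\<dots> = q ^ 8" using card by (simp flip: power_add)
    finally show ?thesis .
  qed
  have dim: "Fq_dim q U = 8" by (rule dim_eq[OF sf cq q2 sub cardU])
  have smul: "smultv l (P x y) \<in> U \<longleftrightarrow>
     (l*x)^q + (l*y)^(q^2) = l * (x^q + y^(q^2)) \<and>
     (l*x)^(q^2) + (l*y)^q + (l*y)^(q^2) = l * (x^(q^2) + y^q + y^(q^2))" for l x y
  proof
    assume "smultv l (P x y) \<in> U"
    then obtain x' y' where e: "smultv l (P x y) = P x' y'" unfolding U by auto
    have "x' = l * x" "y' = l * y" using e unfolding vec4_eq smultv_comp Pc by auto
    thus "(l*x)^q + (l*y)^(q^2) = l * (x^q + y^(q^2)) \<and>
     (l*x)^(q^2) + (l*y)^q + (l*y)^(q^2) = l * (x^(q^2) + y^q + y^(q^2))"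
      using e unfolding vec4_eq smultv_comp Pc by auto
  next
    assume E: "(l*x)^q + (l*y)^(q^2) = l * (x^q + y^(q^2)) \<and>
     (l*x)^(q^2) + (l*y)^q + (l*y)^(q^2) = l * (x^(q^2) + y^q + y^(q^2))"
    have "smultv l (P x y) = P (l*x) (l*y)" unfolding vec4_eq smultv_comp Pc using E by simp
    thus "smultv l (P x y) \<in> U" unfolding U by auto
  qed
  have finC: "finite (card ` {S. S \<subseteq> W \<and> Fq_indep q S})" for W :: "('a^4) set" by simp
  show ?thesis
  proof
    assume ms: "maximum_scattered q 4 U"
    show "h mod 4 \<noteq> 2"
    proof
      assume hm: "h mod 4 = 2"
      obtain l x y :: 'a where nl: "l ^ q \<noteq> l" and nz: "x \<noteq> 0 \<or> y \<noteq> 0"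
        and E: "(l*x)^q + (l*y)^(q^2) = l * (x^q + y^(q^2)) \<and>
          (l*x)^(q^2) + (l*y)^q + (l*y)^(q^2) = l * (x^(q^2) + y^q + y^(q^2))"
        using unscattered_core[OF card q h1 hm] by blast
      define u where "u = P x y"
      define v where "v = smultv l u"
      have u0: "u \<noteq> 0" unfolding u_def using Pnz nz by simp
      have uU: "u \<in> U" unfolding u_def U by auto
      have vU: "v \<in> U" unfolding v_def u_def using smul E by simp
      obtain i where ui: "u $ i \<noteq> 0" using u0 by (metis vec_eq_iff zero_index)
      have uv: "u \<noteq> v"
      proof
        assume "u = v"
        hence "u $ i = v $ i" by simp
        also have "v $ i = l * u $ i" unfolding v_def by (rule smultv_comp)
        finally have "u $ i = l * u $ i" .
        hence "l = 1" using ui by simp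
        thus False using nl by simp
      qed
      have "u \<in> Fspan1 u" unfolding Fspan1_def by (auto intro!: exI[of _ 1])
      moreover have "v \<in> Fspan1 u" unfolding Fspan1_def v_def by auto
      ultimately have sp: "{u, v} \<subseteq> U \<inter> Fspan1 u" using uU vU by simp
      have ind: "Fq_indep q {u, v}"
        unfolding indep_iff
      proof (intro conjI allI impI ballI)
        show "finite {u, v}" by simp
        fix e s assume eK: "\<forall>s\<in>{u, v}. e s \<in> Fq q" and e0: "comb e {u, v} = 0" and s: "s \<in> {u, v}"
        have "comb e {u, v} = smultv (e u) u + smultv (e v) v"
          by (rule comb_two) (use uv in auto)
        hence "(smultv (e u) u + smultv (e v) v) $ i = 0" using e0 by simp
        hence "e u * u $ i + e v * (l * u $ i) = 0"
          by (simp only: plus_vec_def vec_lambda_beta smultv_comp v_def)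
        hence "(e u + e v * l) * u $ i = 0" by (simp add: algebra_simps)
        hence lin: "e u + e v * l = 0" using ui by simp
        have ev: "e v = 0"
        proof (rule ccontr)
          assume "e v \<noteq> 0"
          hence "l = - e u / e v" using lin by (simp add: field_simps eq_neg_iff_add_eq_0)
          moreover have "- e u / e v \<in> Fq q" using eK sf unfolding subf_def by auto
          ultimately show False using nl unfolding Fq_def by simp
        qed
        hence "e u = 0" using lin by simp
        thus "e s = 0" using ev s by auto
      qed
      have "2 \<in> card ` {S. S \<subseteq> U \<inter> Fspan1 u \<and> Fq_indep q S}"
        using sp ind uv by (auto intro!: image_eqI[of _ _ "{u, v}"])
      hence "2 \<le> Fq_dim q (U \<inter> Fspan1 u)" unfolding Fq_dim_def using finC by (simp add: Max_ge)
      moreover have "Fq_dim q (U \<inter> Fspan1 u) \<le> 1" using ms u0 unfolding maximum_scattered_def scattered_def by blast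
      ultimately show False by simp
    qed
  next
    assume hm: "h mod 4 \<noteq> 2"
    have "Fq_dim q (U \<inter> Fspan1 w) \<le> 1" if w0: "w \<noteq> 0" for w
      unfolding Fq_dim_def
    proof (rule Max.boundedI)
      show "finite (card ` {S. S \<subseteq> U \<inter> Fspan1 w \<and> Fq_indep q S})" by simp
      have "Fq_indep q {}" unfolding indep_iff by simp
      thus "card ` {S. S \<subseteq> U \<inter> Fspan1 w \<and> Fq_indep q S} \<noteq> {}" by auto
      fix n assume "n \<in> card ` {S. S \<subseteq> U \<inter> Fspan1 w \<and> Fq_indep q S}"
      then obtain S where S: "S \<subseteq> U \<inter> Fspan1 w" "Fq_indep q S" and n: "n = card S" by auto
      show "n \<le> 1"
      proof (rule ccontr)
        assume "\<not> n \<le> 1"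
        hence c2S: "card S \<ge> 2" using n by simp
        then obtain u1 where u1: "u1 \<in> S" by fastforce
        have "card (S - {u1}) \<ge> 1" using c2S u1 by (simp add: card_Diff_singleton_if)
        hence "S - {u1} \<noteq> {}" by (metis card.empty not_one_le_zero)
        then obtain u2 where u2: "u2 \<in> S" "u2 \<noteq> u1" by blast
        obtain c1 where c1: "u1 = smultv c1 w" using S u1 unfolding Fspan1_def by auto
        obtain c2 where c2': "u2 = smultv c2 w" using S u2 unfolding Fspan1_def by auto
        have u10: "u1 \<noteq> 0" by (rule indep_nonzero[OF S(2) u1 sf])
        have c10: "c1 \<noteq> 0" using u10 c1 by auto
        have u2l: "u2 = smultv (c2 / c1) u1"
          unfolding c1 c2' by (simp add: smultv_def vec_eq_iff c10)
        obtain x y where xy: "u1 = P x y" using S u1 unfolding U by auto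
        have nz: "x \<noteq> 0 \<or> y \<noteq> 0" using u10 xy P0 by auto
        have "smultv (c2 / c1) (P x y) \<in> U" using S u2 u2l xy by auto
        hence "(c2 / c1) ^ q = c2 / c1"
          using scattered_core[OF card q h1 hm] nz unfolding smul by blast
        hence "c2 / c1 \<in> Fq q" unfolding Fq_def by simp
        thus False using indep_not_mult[OF S(2) u1 u2(1) u2(2)[symmetric] sf _ u2l] by simp
      qed
    qed
    hence "scattered q U" unfolding scattered_def using sub by blast
    thus "maximum_scattered q 4 U" unfolding maximum_scattered_def using dim by simp
  qed
qed

end
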